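(* Let $\langle W,\mathcal{N},V\rangle$ be an nIML1-model satisfying the $T$-condition (for all $w,v\in W$, $v\in\bigcup\mathcal{N}_w$ implies $\bigcap\mathcal{N}_v\subseteq\bigcup\mathcal{N}_w$). Then for every $w\in W$ the family $\mathcal{U}_w$ of $w$-open sets is a topology on $\bigcup\mathcal{N}_w$: it contains $\emptyset$ and $\bigcup\mathcal{N}_w$, and it is closed under arbitrary unions and under arbitrary intersections.
   Context: An nIML1-model is a triple $\langle W,\mathcal{N},V\rangle$ with $W\neq\emptyset$, $\mathcal{N}:W\to P(P(W))$ satisfying for all $w$: (a) $w\in\bigcap\mathcal{N}_w$; (b) $\bigcap\mathcal{N}_w\in\mathcal{N}_w$; (c) $u\in\bigcap\mathcal{N}_w\Rightarrow\bigcap\mathcal{N}_u\subseteq\bigcap\mathcal{N}_w$; (d) $\bigcap\mathcal{N}_w\subseteq X\subseteq\bigcup\mathcal{N}_w\Rightarrow X\in\mathcal{N}_w$; (e) $u\in\bigcap\mathcal{N}_w\Rightarrow\bigcup\mathcal{N}_u\subseteq\bigcup\mathcal{N}_w$, where $\bigcap\mathcal{N}_w$ and $\bigcup\mathcal{N}_w$ are the intersection and union of the family $\mathcal{N}_w$, and $V$ is a map from propositional variables to $P(W)$ with $w\in V(q)\Rightarrow\bigcap\mathcal{N}_w\subseteq V(q)$. A set $X\subseteq W$ is $w$-open iff $X\subseteq\bigcup\mathcal{N}_w$ and $\bigcap\mathcal{N}_v\subseteq X$ for every $v\in X$; $\mathcal{U}_w$ is the set of all $w$-open sets. (The intersection of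 the empty subfamily is understood as the whole space $\bigcup\mathcal{N}_w$.) *)

theory Defs
  imports Main
begin

(* An nIML1-model <W, N, V>; N is only relevant on W, and N w is a family of subsets of W. *)
definition nIML1_model :: "'a set \<Rightarrow> ('a \<Rightarrow> 'a set set) \<Rightarrow> ('p \<Rightarrow> 'a set) \<Rightarrow> bool" where
  "nIML1_model W N V \<longleftrightarrow>
     W \<noteq> {} \<and>
     (\<forall>w\<in>W. N w \<subseteq> Pow W) \<and>
     (\<forall>q. V q \<subseteq> W) \<and>
     (\<forall>w\<in>W. w \<in> \<Inter>(N w)) \<and>
     (\<forall>w\<in>W. \<Inter>(N w) \<in> N w) \<and>
     (\<forall>w\<in>W. \<forall>u\<in>\<Inter>(N w). \<Inter>(N u) \<subseteq> \<Inter>(N w)) \<and>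
     (\<forall>w\<in>W. \<forall>X. \<Inter>(N w) \<subseteq> X \<and> X \<subseteq> \<Union>(N w) \<longrightarrow> X \<in> N w) \<and>
     (\<forall>w\<in>W. \<forall>u\<in>\<Inter>(N w). \<Union>(N u) \<subseteq> \<Union>(N w)) \<and>
     (\<forall>q. \<forall>w\<in>V q. \<Inter>(N w) \<subseteq> V q)"

definition T_condition :: "'a set \<Rightarrow> ('a \<Rightarrow> 'a set set) \<Rightarrow> bool" where
  "T_condition W N \<longleftrightarrow> (\<forall>w\<in>W. \<forall>v\<in>W. v \<in> \<Union>(N w) \<longrightarrow> \<Inter>(N v) \<subseteq> \<Union>(N w))"

definition w_open :: "('a \<Rightarrow> 'a set set) \<Rightarrow> 'a \<Rightarrow> 'a set \<Rightarrow> bool" where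
  "w_open N w X \<longleftrightarrow> X \<subseteq> \<Union>(N w) \<and> (\<forall>v\<in>X. \<Inter>(N v) \<subseteq> X)"

definition U_fam :: "('a \<Rightarrow> 'a set set) \<Rightarrow> 'a \<Rightarrow> 'a set set" where
  "U_fam N w = {X. w_open N w X}"

end

theory Submission
  imports Defs
begin

theorem theorem10p1:
  fixes W :: "'a set" and N :: "'a \<Rightarrow> 'a set set" and V :: "'p \<Rightarrow> 'a set"
  assumes "nIML1_model W N V" and "T_condition W N" and "w \<in> W"
  shows "{} \<in> U_fam N w \<and> \<Union>(N w) \<in> U_fam N w \<and>
         (\<forall>F. F \<subseteq> U_fam N w \<longrightarrow> \<Union>F \<in> U_fam N w) \<and>
         (\<forall>F. F \<subseteq> U_fam N w \<longrightarrow> \<Union>(N w) \<inter> \<Inter>F \<in> U_fam N w)"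
proof -
  have "\<forall>w\<in>W. N w \<subseteq> Pow W" using assms(1) unfolding nIML1_model_def by (elim conjE)
  hence "N w \<subseteq> Pow W" using assms(3) by (rule bspec)
  hence sub: "\<Union>(N w) \<subseteq> W" by (rule Union_least[OF PowD[OF subsetD]])
  have T: "\<And>v. v \<in> \<Union>(N w) \<Longrightarrow> \<Inter>(N v) \<subseteq> \<Union>(N w)"
    using assms(2,3) sub unfolding T_condition_def by blast
  have a: "{} \<in> U_fam N w" unfolding U_fam_def w_open_def by simp
  have b: "\<Union>(N w) \<in> U_fam N w" unfolding U_fam_def w_open_def using T by blast
  have c: "\<forall>F. F \<subseteq> U_fam N w \<longrightarrow> \<Union>F \<in> U_fam N w"
  proof (intro allI impI)
    fix F assume F: "F \<subseteq> U_fam N w"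
    show "\<Union>F \<in> U_fam N w" unfolding U_fam_def mem_Collect_eq w_open_def
    proof
      show "\<Union>F \<subseteq> \<Union>(N w)" using F unfolding U_fam_def w_open_def by blast
      show "\<forall>v\<in>\<Union>F. \<Inter>(N v) \<subseteq> \<Union>F"
      proof
        fix v assume "v \<in> \<Union>F"
        then obtain X where X: "X \<in> F" "v \<in> X" by blast
        then have "\<Inter>(N v) \<subseteq> X" using F unfolding U_fam_def w_open_def by blast
        then show "\<Inter>(N v) \<subseteq> \<Union>F" using X by blast
      qed
    qed
  qed
  have d: "\<forall>F. F \<subseteq> U_fam N w \<longrightarrow> \<Union>(N w) \<inter> \<Inter>F \<in> U_fam N w"
  proof (intro allI impI)
    fix F assume F: "F \<subseteq> U_fam N w"
    show "\<Union>(N w) \<inter> \<Inter>F \<in> U_fam N w" unfolding U_fam_def mem_Collect_eq w_open_def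
    proof
      show "\<Union>(N w) \<inter> \<Inter>F \<subseteq> \<Union>(N w)" by blast
      show "\<forall>v\<in>\<Union>(N w) \<inter> \<Inter>F. \<Inter>(N v) \<subseteq> \<Union>(N w) \<inter> \<Inter>F"
      proof
        fix v assume v: "v \<in> \<Union>(N w) \<inter> \<Inter>F"
        have 1: "\<Inter>(N v) \<subseteq> \<Union>(N w)" using T v by blast
        have 2: "\<Inter>(N v) \<subseteq> X" if "X \<in> F" for X
        proof -
          have "w_open N w X" using F that unfolding U_fam_def by blast
          moreover have "v \<in> X" using v that by blast
          ultimately show ?thesis unfolding w_open_def by blast
        qed
        show "\<Inter>(N v) \<subseteq> \<Union>(N w) \<inter> \<Inter>F" using 1 2 by blast
      qed
    qed
  qed
  show ?thesis using a b c d by blast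
qed

end
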